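(* In System $\mathsf{F_{<:}^{K\top}}$, for any type $\Theta\vdash T$, the type $\Theta^*(T)$ is not a type variable, satisfies $\Theta\vdash T<:\Theta^*(T)$, and for every type $\Theta\vdash T'$ that is not a type variable, if $\Theta\vdash T<:T'$ then $\Theta\vdash\Theta^*(T)<:T'$.
   Context: System $\mathsf{F_{<:}^{K\top}}$: raw types $T ::= \top \mid X \mid T\to T \mid \forall^{\mathsf K}(X<:T).T \mid \forall^\top(X<:T).T$, up to $\alpha$-conversion. Contexts $\Theta$: finite sequences of $X<:T$ or $x:T$ with distinct variables, each type well-formed over the preceding part. Subtyping $\Theta\vdash S<:T$: (Var) $\Theta,X<:T,\Theta'\vdash X<:T$; (Top) $T<:\top$; (Refl); (Trans); ($\to$) from $S'<:S$, $T<:T'$ infer $S\to T<:S'\to T'$; ($\forall$-Fun) from $\Theta,X<:S\vdash T<:T'$ infer $\Theta\vdash\forall^{\mathsf K}(X<:S).T<:\forall^{\mathsf K}(X<:S).T'$; ($\forall$-Loc) from $\Theta\vdash T_0<:S_0$, $\Theta,X<:S_0\vdash S_1<:T_1$ infer $\Theta\vdash\forall^{\mathsf K}(X<:S_0).S_1<:\forall^\top(X<:T_0).T_1$; ($\forall$-Top) from $\Theta\vdash T_0<:S_0$, $\Theta,X<:\top\vdash S_1<:T_1$ infer $\Theta\vdash\forall^\top(X<:S_0).S_1<:\forall^\top(X<:T_0).T_1$. $\Theta^*(T)$ is defined by: $\Theta^*(T)=\Theta^*(S)$ if $T\equiv X$ and $\Theta\equiv\Theta',X<:S,\Theta''$;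 $\Theta^*(T)=T$ otherwise. *)

theory Defs
  imports Main
begin

text \<open>Types of System F-sub with kernel and top quantifiers, up to alpha-conversion,
  represented with de Bruijn indices. In AllK S T and AllT S T the body T binds index 0.\<close>

datatype type =
    Top
  | TVar nat
  | Fun type type
  | AllK type type
  | AllT type type

datatype binding = VarB type | TVarB type

type_synonym env = "binding list"

fun liftT :: "nat \<Rightarrow> nat \<Rightarrow> type \<Rightarrow> type" where
  "liftT n k Top = Top"
| "liftT n k (TVar i) = (if i < k then TVar i else TVar (i + n))"
| "liftT n k (Fun S T) = Fun (liftT n k S) (liftT n k T)"
| "liftT n k (AllK S T) = AllK (liftT n k S) (liftT n (Suc k) T)"
| "liftT n k (AllT S T) = AllT (liftT n k S) (liftT n (Suc k) T)"

fun mapB :: "(type \<Rightarrow> type) \<Rightarrow> binding \<Rightarrow> binding" where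
  "mapB f (VarB T) = VarB (f T)"
| "mapB f (TVarB T) = TVarB (f T)"

text \<open>Context lookup: the i-th binding (counting from the most recent), with its type
  shifted so that it is interpreted in the whole context.\<close>
definition lookup :: "env \<Rightarrow> nat \<Rightarrow> binding option" where
  "lookup \<Gamma> i = (if i < length \<Gamma> then Some (mapB (liftT (Suc i) 0) (\<Gamma> ! i)) else None)"

inductive wf_type :: "env \<Rightarrow> type \<Rightarrow> bool" where
  wf_TVar: "lookup \<Gamma> i = Some (TVarB U) \<Longrightarrow> wf_type \<Gamma> (TVar i)"
| wf_Top: "wf_type \<Gamma> Top"
| wf_Fun: "wf_type \<Gamma> S \<Longrightarrow> wf_type \<Gamma> T \<Longrightarrow> wf_type \<Gamma> (Fun S T)"
| wf_AllK: "wf_type \<Gamma> S \<Longrightarrow> wf_type (TVarB S # \<Gamma>) T \<Longrightarrow> wf_type \<Gamma> (AllK S T)"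
| wf_AllT: "wf_type \<Gamma> S \<Longrightarrow> wf_type (TVarB S # \<Gamma>) T \<Longrightarrow> wf_type \<Gamma> (AllT S T)"

inductive wf_env :: "env \<Rightarrow> bool" where
  wf_Nil: "wf_env []"
| wf_TVarB: "wf_env \<Gamma> \<Longrightarrow> wf_type \<Gamma> T \<Longrightarrow> wf_env (TVarB T # \<Gamma>)"
| wf_VarB: "wf_env \<Gamma> \<Longrightarrow> wf_type \<Gamma> T \<Longrightarrow> wf_env (VarB T # \<Gamma>)"

inductive subtype :: "env \<Rightarrow> type \<Rightarrow> type \<Rightarrow> bool" where
  SA_Var: "wf_env \<Gamma> \<Longrightarrow> lookup \<Gamma> i = Some (TVarB U) \<Longrightarrow> subtype \<Gamma> (TVar i) U"
| SA_Top: "wf_env \<Gamma> \<Longrightarrow> wf_type \<Gamma> T \<Longrightarrow> subtype \<Gamma> T Top"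
| SA_Refl: "wf_env \<Gamma> \<Longrightarrow> wf_type \<Gamma> T \<Longrightarrow> subtype \<Gamma> T T"
| SA_Trans: "subtype \<Gamma> S U \<Longrightarrow> subtype \<Gamma> U T \<Longrightarrow> subtype \<Gamma> S T"
| SA_Fun: "subtype \<Gamma> S' S \<Longrightarrow> subtype \<Gamma> T T' \<Longrightarrow> subtype \<Gamma> (Fun S T) (Fun S' T')"
| SA_AllFun: "subtype (TVarB S # \<Gamma>) T T' \<Longrightarrow> subtype \<Gamma> (AllK S T) (AllK S T')"
| SA_AllLoc: "subtype \<Gamma> T0 S0 \<Longrightarrow> subtype (TVarB S0 # \<Gamma>) S1 T1 \<Longrightarrow>
              subtype \<Gamma> (AllK S0 S1) (AllT T0 T1)"
| SA_AllTop: "subtype \<Gamma> T0 S0 \<Longrightarrow> subtype (TVarB Top # \<Gamma>) S1 T1 \<Longrightarrow>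
              subtype \<Gamma> (AllT S0 S1) (AllT T0 T1)"

fun is_TVar :: "type \<Rightarrow> bool" where
  "is_TVar (TVar i) = True"
| "is_TVar _ = False"

lemma liftT_TVar_ge: "liftT (Suc i) 0 S = TVar j \<Longrightarrow> Suc i \<le> j"
  by (cases S) (auto split: if_splits)

lemma lookup_TVarB_TVar:
  assumes "lookup \<Gamma> i = Some (TVarB (TVar j))"
  shows "i < j \<and> i < length \<Gamma>"
proof -
  have l: "i < length \<Gamma>" and e: "mapB (liftT (Suc i) 0) (\<Gamma> ! i) = TVarB (TVar j)"
    using assms by (simp_all add: lookup_def split: if_splits)
  obtain S where "liftT (Suc i) 0 S = TVar j"
    using e by (cases "\<Gamma> ! i") auto
  then show ?thesis using l liftT_TVar_ge by fastforce
qed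

fun tvar_bound :: "binding option \<Rightarrow> type option" where
  "tvar_bound (Some (TVarB S)) = Some S"
| "tvar_bound _ = None"

lemma promote_measure_lemma:
  "tvar_bound (lookup \<Gamma> i) = Some S \<Longrightarrow>
   (case S of TVar j \<Rightarrow> length \<Gamma> - j | _ \<Rightarrow> 0) < length \<Gamma> - i"
proof -
  assume a: "tvar_bound (lookup \<Gamma> i) = Some S"
  then have b: "lookup \<Gamma> i = Some (TVarB S)"
    by (cases "lookup \<Gamma> i" rule: tvar_bound.cases) auto
  then have "i < length \<Gamma>" by (simp add: lookup_def split: if_splits)
  with b show ?thesis
    using lookup_TVarB_TVar[of \<Gamma> i] by (cases S) auto
qed

text \<open>Theta-star: Theta*(X) = Theta*(S) if X<:S in Theta, and Theta*(T) = T otherwise.\<close>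
function promote :: "env \<Rightarrow> type \<Rightarrow> type" where
  "promote \<Gamma> (TVar i) =
     (case tvar_bound (lookup \<Gamma> i) of Some S \<Rightarrow> promote \<Gamma> S | None \<Rightarrow> TVar i)"
| "promote \<Gamma> Top = Top"
| "promote \<Gamma> (Fun S T) = Fun S T"
| "promote \<Gamma> (AllK S T) = AllK S T"
| "promote \<Gamma> (AllT S T) = AllT S T"
  by pat_completeness auto
termination
  by (relation "measure (\<lambda>(\<Gamma>, T). case T of TVar i \<Rightarrow> length \<Gamma> - i | _ \<Rightarrow> 0)")
     (simp_all add: promote_measure_lemma)

end

theory Submission
  imports Defs
begin

definition tv :: "env \<Rightarrow> nat \<Rightarrow> bool" where
  "tv \<Gamma> i = (\<exists>U. lookup \<Gamma> i = Some (TVarB U))"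

lemma tv_Suc: "tv (B # \<Gamma>) (Suc i) = tv \<Gamma> i"
  unfolding tv_def lookup_def by (cases "\<Gamma> ! i") auto

lemma tv_0: "tv (TVarB S # \<Gamma>) 0"
  unfolding tv_def lookup_def by auto

lemma wf_TVar_iff: "wf_type \<Gamma> (TVar i) = tv \<Gamma> i"
  unfolding tv_def by (auto intro: wf_TVar elim: wf_type.cases)

lemma wf_weaken:
  "wf_type \<Gamma> T \<Longrightarrow> (\<forall>i. tv \<Gamma> i \<longrightarrow> tv \<Gamma>' (if i < k then i else Suc i))
   \<Longrightarrow> wf_type \<Gamma>' (liftT 1 k T)"
proof (induction arbitrary: \<Gamma>' k rule: wf_type.induct)
  case (wf_TVar \<Gamma> i U)
  then have "tv \<Gamma> i" by (auto simp: tv_def)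
  with wf_TVar.prems show ?case by (auto simp: wf_TVar_iff split: if_splits)
next
  case (wf_Top \<Gamma>)
  then show ?case by (simp add: wf_type.wf_Top)
next
  case (wf_Fun \<Gamma> S T)
  then show ?case by (simp add: wf_type.wf_Fun)
next
  case (wf_AllK \<Gamma> S T)
  have "\<forall>i. tv (TVarB S # \<Gamma>) i \<longrightarrow> tv (TVarB (liftT 1 k S) # \<Gamma>') (if i < Suc k then i else Suc i)"
  proof (intro allI impI)
    fix i assume "tv (TVarB S # \<Gamma>) i"
    then show "tv (TVarB (liftT 1 k S) # \<Gamma>') (if i < Suc k then i else Suc i)"
      using wf_AllK.prems by (cases i) (auto simp: tv_Suc tv_0 split: if_splits)
  qed
  then show ?case using wf_AllK by (simp add: wf_type.wf_AllK)
next
  case (wf_AllT \<Gamma> S T)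
  have "\<forall>i. tv (TVarB S # \<Gamma>) i \<longrightarrow> tv (TVarB (liftT 1 k S) # \<Gamma>') (if i < Suc k then i else Suc i)"
  proof (intro allI impI)
    fix i assume "tv (TVarB S # \<Gamma>) i"
    then show "tv (TVarB (liftT 1 k S) # \<Gamma>') (if i < Suc k then i else Suc i)"
      using wf_AllT.prems by (cases i) (auto simp: tv_Suc tv_0 split: if_splits)
  qed
  then show ?case using wf_AllT by (simp add: wf_type.wf_AllT)
qed

lemma wf_weaken0: "wf_type \<Gamma> T \<Longrightarrow> wf_type (B # \<Gamma>) (liftT 1 0 T)"
  by (rule wf_weaken) (auto simp: tv_Suc)

lemma liftT_liftT: "liftT n k (liftT m k X) = liftT (n + m) k X"
  by (induction X arbitrary: k) auto

lemma lookup_wf: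
  "wf_env \<Gamma> \<Longrightarrow> lookup \<Gamma> i = Some (TVarB U) \<Longrightarrow> wf_type \<Gamma> U"
proof (induction arbitrary: i U rule: wf_env.induct)
  case wf_Nil
  then show ?case by (simp add: lookup_def)
next
  case (wf_TVarB \<Gamma> T)
  show ?case
  proof (cases i)
    case 0
    then show ?thesis using wf_TVarB using wf_weaken0[of \<Gamma> T "TVarB T"] by (auto simp: lookup_def)
  next
    case (Suc j)
    with wf_TVarB.prems obtain X where j: "j < length \<Gamma>" "\<Gamma> ! j = TVarB X"
      "U = liftT (Suc (Suc j)) 0 X"
      by (cases "\<Gamma> ! j") (auto simp: lookup_def split: if_splits)
    then have "lookup \<Gamma> j = Some (TVarB (liftT (Suc j) 0 X))" by (simp add: lookup_def)
    then have "wf_type \<Gamma> (liftT (Suc j) 0 X)" using wf_TVarB.IH by blast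
    then have "wf_type (TVarB T # \<Gamma>) (liftT 1 0 (liftT (Suc j) 0 X))" by (rule wf_weaken0)
    then show ?thesis using j by (simp add: liftT_liftT)
  qed
next
  case (wf_VarB \<Gamma> T)
  show ?case
  proof (cases i)
    case 0
    then show ?thesis using wf_VarB by (auto simp: lookup_def)
  next
    case (Suc j)
    with wf_VarB.prems obtain X where j: "j < length \<Gamma>" "\<Gamma> ! j = TVarB X"
      "U = liftT (Suc (Suc j)) 0 X"
      by (cases "\<Gamma> ! j") (auto simp: lookup_def split: if_splits)
    then have "lookup \<Gamma> j = Some (TVarB (liftT (Suc j) 0 X))" by (simp add: lookup_def)
    then have "wf_type \<Gamma> (liftT (Suc j) 0 X)" using wf_VarB.IH by blast
    then have "wf_type (VarB T # \<Gamma>) (liftT 1 0 (liftT (Suc j) 0 X))" by (rule wf_weaken0)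
    then show ?thesis using j by (simp add: liftT_liftT)
  qed
qed

lemma promote_props:
  "wf_env \<Gamma> \<Longrightarrow> wf_type \<Gamma> T \<Longrightarrow>
   \<not> is_TVar (promote \<Gamma> T) \<and> wf_type \<Gamma> (promote \<Gamma> T) \<and> subtype \<Gamma> T (promote \<Gamma> T)"
proof (induction \<Gamma> T rule: promote.induct)
  case (1 \<Gamma> i)
  from 1(3) obtain U where U: "lookup \<Gamma> i = Some (TVarB U)" by (auto elim: wf_type.cases)
  then have wU: "wf_type \<Gamma> U" using 1(2) lookup_wf by blast
  have e: "promote \<Gamma> (TVar i) = promote \<Gamma> U" using U by simp
  have IH: "\<not> is_TVar (promote \<Gamma> U) \<and> wf_type \<Gamma> (promote \<Gamma> U) \<and> subtype \<Gamma> U (promote \<Gamma> U)"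
    using 1(1)[of U] U wU 1(2) by simp
  moreover have "subtype \<Gamma> (TVar i) U" using U 1(2) by (rule SA_Var[rotated])
  ultimately show ?case unfolding e by (blast intro: SA_Trans)
qed (auto intro: SA_Refl)

lemma subtype_promote:
  "subtype \<Gamma> S U \<Longrightarrow> subtype \<Gamma> (promote \<Gamma> S) (promote \<Gamma> U)"
proof (induction rule: subtype.induct)
  case (SA_Var \<Gamma> i U)
  then have "wf_type \<Gamma> U" using lookup_wf by blast
  then have "wf_type \<Gamma> (promote \<Gamma> U)" using promote_props SA_Var by blast
  then show ?case using SA_Var by (simp add: SA_Refl)
next
  case (SA_Top \<Gamma> T)
  then show ?case using promote_props by (simp add: subtype.SA_Top)
next
  case (SA_Refl \<Gamma> T)
  then show ?case using promote_props by (blast intro: subtype.SA_Refl)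
next
  case (SA_Trans \<Gamma> S U T)
  then show ?case by (blast intro: subtype.SA_Trans)
qed (auto intro: subtype.intros)

theorem lemma6p3:
  assumes "wf_env \<Theta>" and "wf_type \<Theta> T"
  shows "\<not> is_TVar (promote \<Theta> T)
         \<and> subtype \<Theta> T (promote \<Theta> T)
         \<and> (\<forall>T'. wf_type \<Theta> T' \<longrightarrow> \<not> is_TVar T' \<longrightarrow> subtype \<Theta> T T'
                  \<longrightarrow> subtype \<Theta> (promote \<Theta> T) T')"
proof -
  have p: "promote \<Theta> T' = T'" if "\<not> is_TVar T'" for T'
    using that by (cases T') auto
  show ?thesis using promote_props[OF assms] subtype_promote p by metis
qed

end
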